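(* Let $\mathbf Q\in\{0,1\}^{J\times K}$ be a fixed $Q$-matrix with rows $\boldsymbol q_j$, let $\mathcal E$ be an attribute hierarchy on $[K]$ with permissible set $\mathcal A=\mathcal A(\mathcal E)$, and let $\Gamma^{\mathcal A}\in\{0,1\}^{J\times|\mathcal A|}$ be given by $\Gamma^{\mathcal A}_{j,\boldsymbol\alpha}=\mathbb 1(\boldsymbol\alpha\succeq\boldsymbol q_j)$. Suppose: (A) there exist two disjoint item sets $S_1,S_2\subseteq[J]$ such that for $i=1,2$ the submatrix $\Gamma^{(S_i,\mathcal A)}$ (rows in $S_i$) has pairwise distinct columns, and $S_1,S_2$ induce the same partial order on $\mathcal A$, i.e. for all $\boldsymbol\alpha,\boldsymbol\alpha'\in\mathcal A$, $\boldsymbol\alpha\succeq_{S_1}\boldsymbol\alpha'$ iff $\boldsymbol\alpha\succeq_{S_2}\boldsymbol\alpha'$; (B) for any distinct $\boldsymbol\alpha,\boldsymbol\alpha'\in\mathcal A$ with $\boldsymbol\alpha'\succeq_{S_i}\boldsymbol\alpha$ for $i=1$ or $i=2$, there exists an item $j\notin S_1\cup S_2$ with $\Gamma^{\mathcal A}_{j,\boldsymbol\alpha}\neq\Gamma^{\mathcal A}_{j,\boldsymbol\alpha'}$; (C) no column of $\Gamma^{\mathcal A}$ equals any column of $\Gamma^{\mathcal A^c}$, where $\mathcal A^c=\{0,1\}^K\setminus\mathcal A$ and $\Gamma^{\mathcal A^c}_{j,\boldsymbol\alpha}=\mathbb 1(\boldsymbol\alpha\succeq\boldsymbol q_j)$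 for $\boldsymbol\alpha\in\mathcal A^c$. Then the LCBN-based cognitive diagnostic model with hierarchy $\mathcal E$ is strictly identifiable: for any valid parameters $(\boldsymbol\Theta,\boldsymbol t)$ and any alternative $(\bar{\mathcal E},\bar{\boldsymbol\Theta},\bar{\boldsymbol t})$ (same $\mathbf Q$) such that $\bar{\mathcal E}$ has at most $|\mathcal A(\mathcal E)|$ permissible patterns, if $\mathbb P(\mathbf R=\boldsymbol r\mid\mathcal E,\boldsymbol\Theta,\boldsymbol t)=\mathbb P(\mathbf R=\boldsymbol r\mid\bar{\mathcal E},\bar{\boldsymbol\Theta},\bar{\boldsymbol t})$ for all $\boldsymbol r\in\{0,1\}^J$, then $(\mathcal E,\boldsymbol\Theta,\boldsymbol t)=(\bar{\mathcal E},\bar{\boldsymbol\Theta},\bar{\boldsymbol t})$.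
   Context: Attribute hierarchy: a set $\mathcal E$ of prerequisite relations $k\to\ell$ on $[K]$ (all prerequisite relations, so irreflexive, acyclic, transitively closed); $\mathcal A(\mathcal E)=\{\boldsymbol\alpha\in\{0,1\}^K:\alpha_\ell=1\Rightarrow\alpha_k=1\text{ whenever }k\to\ell\in\mathcal E\}$; $\mathrm{pa}(k)=\{\ell:\ell\to k\in\mathcal E\}$. LCBN: with $\boldsymbol t\in(0,1)^K$, $p_{\boldsymbol\alpha}=\prod_{k=1}^K t_k^{\alpha_k\pi_k}(1-t_k)^{(1-\alpha_k)\pi_k}$, $\pi_k=\prod_{\ell\in\mathrm{pa}(k)}\alpha_\ell$ (empty product $1$, $0^0=1$); $p_{\boldsymbol\alpha}=0$ off $\mathcal A(\mathcal E)$. Measurement model: item parameters $\boldsymbol\Theta=(\theta_{j,\boldsymbol\alpha})_{j\in[J],\boldsymbol\alpha\in\mathcal A(\mathcal E)}$, $\theta_{j,\boldsymbol\alpha}=\mathbb P(R_j=1\mid\boldsymbol\alpha)\in(0,1)$, responses conditionally independent given $\boldsymbol\alpha$, and valid parameters satisfy: $\theta_{j,\boldsymbol\alpha}=\theta_{j,\boldsymbol\alpha'}$ whenever $\boldsymbol\alpha\succeq\boldsymbol q_j$ and $\boldsymbol\alpha'\succeq\boldsymbol q_j$, and $\theta_{j,\boldsymbol\alpha}>\theta_{j,\boldsymbol\alpha'}$ whenever $\boldsymbol\alpha\succeq\boldsymbol q_j$ and $\boldsymbol\alpha'\not\succeq\boldsymbol q_j$ ($\succeq$ is componentwise $\ge$).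 Observed distribution: $\mathbb P(\mathbf R=\boldsymbol r)=\sum_{\boldsymbol\alpha\in\mathcal A(\mathcal E)}p_{\boldsymbol\alpha}\prod_j\theta_{j,\boldsymbol\alpha}^{r_j}(1-\theta_{j,\boldsymbol\alpha})^{1-r_j}$. For $S\subseteq[J]$ and $\boldsymbol\alpha,\boldsymbol\alpha'\in\mathcal A$, $\boldsymbol\alpha\succeq_S\boldsymbol\alpha'$ means $\Gamma^{\mathcal A}_{j,\boldsymbol\alpha}\ge\Gamma^{\mathcal A}_{j,\boldsymbol\alpha'}$ for all $j\in S$. *)

theory Defs
  imports Complex_Main
begin

(* Conventions: attributes are indexed by {0..<K}, items by {0..<J}.
   An attribute pattern alpha in {0,1}^K is represented by the set of
   attributes it possesses (alpha \<subseteq> {0..<K}); likewise the row q_j of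
   the Q-matrix is the set Q j \<subseteq> {0..<K}. Then alpha \<succeq> q_j iff Q j \<subseteq> alpha.
   A response vector r in {0,1}^J is the set of correctly answered items.
   A prerequisite relation k \<rightarrow> l is the pair (k,l) \<in> E. *)

definition is_hierarchy :: "nat \<Rightarrow> (nat \<times> nat) set \<Rightarrow> bool" where
  "is_hierarchy K E \<longleftrightarrow> E \<subseteq> {0..<K} \<times> {0..<K} \<and> irrefl E \<and> acyclic E \<and> trans E"

definition perm :: "nat \<Rightarrow> (nat \<times> nat) set \<Rightarrow> nat set set" where
  "perm K E = {\<alpha>. \<alpha> \<subseteq> {0..<K} \<and> (\<forall>k l. (k, l) \<in> E \<longrightarrow> l \<in> \<alpha> \<longrightarrow> k \<in> \<alpha>)}"

definition pa :: "(nat \<times> nat) set \<Rightarrow> nat \<Rightarrow> nat set" where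
  "pa E k = {l. (l, k) \<in> E}"

definition lcbn_prob :: "nat \<Rightarrow> (nat \<times> nat) set \<Rightarrow> (nat \<Rightarrow> real) \<Rightarrow> nat set \<Rightarrow> real" where
  "lcbn_prob K E t \<alpha> =
     (if \<alpha> \<in> perm K E then
        (\<Prod>k\<in>{0..<K}. if pa E k \<subseteq> \<alpha> then (if k \<in> \<alpha> then t k else 1 - t k) else 1)
      else 0)"

definition Gam :: "(nat \<Rightarrow> nat set) \<Rightarrow> nat \<Rightarrow> nat set \<Rightarrow> bool" where
  "Gam Q j \<alpha> \<longleftrightarrow> Q j \<subseteq> \<alpha>"

definition geS :: "(nat \<Rightarrow> nat set) \<Rightarrow> nat set \<Rightarrow> nat set \<Rightarrow> nat set \<Rightarrow> bool" where
  "geS Q S \<alpha> \<alpha>' \<longleftrightarrow> (\<forall>j\<in>S. Gam Q j \<alpha>' \<longrightarrow> Gam Q j \<alpha>)"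

definition valid_t :: "nat \<Rightarrow> (nat \<Rightarrow> real) \<Rightarrow> bool" where
  "valid_t K t \<longleftrightarrow> (\<forall>k<K. 0 < t k \<and> t k < 1)"

definition valid_theta :: "nat \<Rightarrow> nat \<Rightarrow> (nat \<Rightarrow> nat set) \<Rightarrow> (nat \<times> nat) set
     \<Rightarrow> (nat \<Rightarrow> nat set \<Rightarrow> real) \<Rightarrow> bool" where
  "valid_theta J K Q E \<theta> \<longleftrightarrow>
     (\<forall>j<J. \<forall>\<alpha>\<in>perm K E. 0 < \<theta> j \<alpha> \<and> \<theta> j \<alpha> < 1) \<and>
     (\<forall>j<J. \<forall>\<alpha>\<in>perm K E. \<forall>\<alpha>'\<in>perm K E.
        Q j \<subseteq> \<alpha> \<longrightarrow> Q j \<subseteq> \<alpha>' \<longrightarrow> \<theta> j \<alpha> = \<theta> j \<alpha>') \<and>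
     (\<forall>j<J. \<forall>\<alpha>\<in>perm K E. \<forall>\<alpha>'\<in>perm K E.
        Q j \<subseteq> \<alpha> \<longrightarrow> \<not> Q j \<subseteq> \<alpha>' \<longrightarrow> \<theta> j \<alpha> > \<theta> j \<alpha>')"

definition resp_prob :: "nat \<Rightarrow> nat \<Rightarrow> (nat \<times> nat) set \<Rightarrow> (nat \<Rightarrow> nat set \<Rightarrow> real)
     \<Rightarrow> (nat \<Rightarrow> real) \<Rightarrow> nat set \<Rightarrow> real" where
  "resp_prob J K E \<theta> t r =
     (\<Sum>\<alpha>\<in>perm K E. lcbn_prob K E t \<alpha> *
        (\<Prod>j\<in>{0..<J}. if j \<in> r then \<theta> j \<alpha> else 1 - \<theta> j \<alpha>))"

end

theory Submission
  imports Defs "Jordan_Normal_Form.Determinant"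
begin

definition Dg :: "nat \<Rightarrow> (nat \<Rightarrow> real) \<Rightarrow> real mat" where
  "Dg n w = mat n n (\<lambda>(k,l). if k = l then w k else 0)"

lemma Dg_carrier[simp]: "Dg n w \<in> carrier_mat n n"
  by (simp add: Dg_def)

lemma mult_entry:
  assumes "A \<in> carrier_mat n n" "B \<in> carrier_mat n n" "i < n" "l < n"
  shows "(A * B) $$ (i,l) = (\<Sum>k\<in>{0..<n}. A $$ (i,k) * B $$ (k,l))"
  using assms by (simp add: scalar_prod_def)

lemma Dg_left:
  assumes "B \<in> carrier_mat n n" "k < n" "l < n"
  shows "(Dg n w * B) $$ (k,l) = w k * B $$ (k,l)"
proof -
  have "(Dg n w * B) $$ (k,l) = (\<Sum>m\<in>{0..<n}. (Dg n w) $$ (k,m) * B $$ (m,l))"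
    using assms by (intro mult_entry) auto
  also have "\<dots> = (\<Sum>m\<in>{0..<n}. (if k = m then w k * B $$ (m,l) else 0))"
    using assms by (intro sum.cong) (auto simp: Dg_def)
  also have "\<dots> = w k * B $$ (k,l)"
    using assms(2) by simp
  finally show ?thesis .
qed

lemma Dg_right:
  assumes "B \<in> carrier_mat n n" "k < n" "i < n"
  shows "(B * Dg n w) $$ (i,k) = B $$ (i,k) * w k"
proof -
  have "(B * Dg n w) $$ (i,k) = (\<Sum>m\<in>{0..<n}. B $$ (i,m) * (Dg n w) $$ (m,k))"
    using assms by (intro mult_entry) auto
  also have "\<dots> = (\<Sum>m\<in>{0..<n}. (if m = k then B $$ (i,m) * w m else 0))"
    using assms by (intro sum.cong) (auto simp: Dg_def)
  also have "\<dots> = B $$ (i,k) * w k"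
    using assms(2) by simp
  finally show ?thesis .
qed

lemma inv_ex:
  assumes "A \<in> carrier_mat n n" "det A \<noteq> (0::real)"
  shows "\<exists>B\<in>carrier_mat n n. A * B = 1\<^sub>m n \<and> B * A = 1\<^sub>m n"
proof -
  have "A \<in> Units (ring_mat TYPE(real) n ())"
    by (rule det_non_zero_imp_unit[OF assms])
  thus ?thesis by (auto simp: Units_def ring_mat_def)
qed

lemma cancel_right:
  assumes "A \<in> carrier_mat n n" "B \<in> carrier_mat n n" "R \<in> carrier_mat n n"
    "det R \<noteq> (0::real)" "A * R = B * R"
  shows "A = B"
proof -
  obtain Ri where Ri: "Ri \<in> carrier_mat n n" "R * Ri = 1\<^sub>m n" using inv_ex assms by blast
  have "A = A * (R * Ri)" using assms(1) Ri(2) by simp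
  also have "\<dots> = (A * R) * Ri" using assms(1,3) Ri(1) by (simp add: assoc_mult_mat)
  also have "\<dots> = (B * R) * Ri" using assms(5) by simp
  also have "\<dots> = B * (R * Ri)" using assms(2,3) Ri(1) by (simp add: assoc_mult_mat)
  also have "\<dots> = B" using assms(2) Ri(2) by simp
  finally show ?thesis .
qed

lemma cancel_left:
  assumes "A \<in> carrier_mat n n" "B \<in> carrier_mat n n" "R \<in> carrier_mat n n"
    "det R \<noteq> (0::real)" "R * A = R * B"
  shows "A = B"
proof -
  obtain Ri where Ri: "Ri \<in> carrier_mat n n" "Ri * R = 1\<^sub>m n" using inv_ex assms by blast
  have "A = (Ri * R) * A" using assms(1) Ri(2) by simp
  also have "\<dots> = Ri * (R * A)" using assms(1,3) Ri(1) by (simp add: assoc_mult_mat)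
  also have "\<dots> = Ri * (R * B)" using assms(5) by simp
  also have "\<dots> = (Ri * R) * B" using assms(2,3) Ri(1) by (simp add: assoc_mult_mat)
  also have "\<dots> = B" using assms(2) Ri(2) by simp
  finally show ?thesis .
qed

lemma det_col_nonzero:
  assumes "P \<in> carrier_mat n n" "det P \<noteq> (0::real)" "k < n"
  shows "\<exists>i<n. P $$ (i,k) \<noteq> 0"
proof (rule ccontr)
  assume "\<not> ?thesis"
  hence z: "\<forall>i<n. P $$ (i,k) = 0" by auto
  define v where "v = vec n (\<lambda>l. if l = k then (1::real) else 0)"
  have v: "v \<in> carrier_vec n" by (simp add: v_def)
  have "v \<noteq> 0\<^sub>v n"
  proof
    assume "v = 0\<^sub>v n"
    hence "v $ k = 0\<^sub>v n $ k" by simp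
    thus False using assms(3) by (simp add: v_def)
  qed
  moreover have "P *\<^sub>v v = 0\<^sub>v n"
  proof (rule eq_vecI)
    fix i assume i: "i < dim_vec (0\<^sub>v n :: real vec)"
    hence "(P *\<^sub>v v) $ i = (\<Sum>l\<in>{0..<n}. P $$ (i,l) * (if l = k then 1 else 0))"
      using assms by (simp add: v_def scalar_prod_def)
    also have "\<dots> = 0" using z i assms(3) by (simp add: if_distrib sum.delta' cong: if_cong)
    finally show "(P *\<^sub>v v) $ i = 0\<^sub>v n $ i" using i by simp
  qed (use assms in simp)
  ultimately have "det P = 0" using det_0_iff_vec_prod_zero[OF assms(1)] v by blast
  thus False using assms(2) by simp
qed

lemma det_row_nonzero:
  assumes "P \<in> carrier_mat n n" "det P \<noteq> (0::real)" "i < n"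
  shows "\<exists>k<n. P $$ (i,k) \<noteq> 0"
proof -
  have "transpose_mat P \<in> carrier_mat n n" using assms by simp
  moreover have "det (transpose_mat P) \<noteq> 0" using assms by (simp add: det_transpose)
  ultimately obtain k where "k < n" "transpose_mat P $$ (k,i) \<noteq> 0"
    using det_col_nonzero assms(3) by blast
  thus ?thesis using assms by auto
qed

lemma Dg_one: "Dg n (\<lambda>_. 1) = 1\<^sub>m n"
  by (rule eq_matI) (auto simp: Dg_def)

lemma det_Dg: "det (Dg n w) = 0 \<longleftrightarrow> (\<exists>k<n. w k = 0)"
proof -
  have ut: "upper_triangular (Dg n w)" by (auto simp: Dg_def upper_triangular_def)
  have "det (Dg n w) = prod_list (diag_mat (Dg n w))"
    by (rule det_upper_triangular[OF ut Dg_carrier])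
  also have "diag_mat (Dg n w) = map w [0..<n]"
    by (auto simp: diag_mat_def Dg_def)
  finally show ?thesis by (auto simp: prod_list_zero_iff)
qed

context
  fixes n :: nat and V V' :: "nat \<Rightarrow> nat \<Rightarrow> real" and q q' :: "nat \<Rightarrow> real"
    and X Y Z :: "nat set" and NX NY :: "nat \<Rightarrow> nat set" and i0 :: nat
  assumes mom: "\<And>c. c \<subseteq> X \<union> Y \<union> Z \<Longrightarrow>
      (\<Sum>k\<in>{0..<n}. q k * (\<Prod>j\<in>c. V k j)) = (\<Sum>k\<in>{0..<n}. q' k * (\<Prod>j\<in>c. V' k j))"
    and disjXY: "X \<inter> Y = {}" and disjXZ: "X \<inter> Z = {}" and disjYZ: "Y \<inter> Z = {}"
    and finX: "finite X" and finY: "finite Y" and finZ: "finite Z"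
    and NXs: "\<And>i. i < n \<Longrightarrow> NX i \<subseteq> X" and NYs: "\<And>i. i < n \<Longrightarrow> NY i \<subseteq> Y"
    and detF: "det (mat n n (\<lambda>(i,k). \<Prod>j\<in>NX i. V k j)) \<noteq> 0"
    and detG: "det (mat n n (\<lambda>(k,l). \<Prod>j\<in>NY l. V k j)) \<noteq> 0"
    and qnz: "\<And>k. k < n \<Longrightarrow> q k \<noteq> 0"
    and Zd: "\<And>i i'. i < n \<Longrightarrow> i' < n \<Longrightarrow> i \<noteq> i' \<Longrightarrow> \<exists>j\<in>Z. V i j \<noteq> V i' j"
    and i0: "i0 < n" "NX i0 = {}" "NY i0 = {}"
begin

definition "Mx W rs = mat n n (\<lambda>(i,k). \<Prod>j\<in>rs i. (W k j :: real))"
definition "My W cs = mat n n (\<lambda>(k,l). \<Prod>j\<in>cs l. (W k j :: real))"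

lemma Mx_carrier[simp]: "Mx W rs \<in> carrier_mat n n" by (simp add: Mx_def)
lemma My_carrier[simp]: "My W cs \<in> carrier_mat n n" by (simp add: My_def)
lemma Mx_dims[simp]: "dim_row (Mx W rs) = n" "dim_col (Mx W rs) = n" by (auto simp: Mx_def)
lemma My_dims[simp]: "dim_row (My W rs) = n" "dim_col (My W rs) = n" by (auto simp: My_def)
lemma Dg_dims[simp]: "dim_row (Dg n w) = n" "dim_col (Dg n w) = n" by (auto simp: Dg_def)

lemma entry3:
  assumes il: "i < n" "l < n"
  shows "(Mx W rs * (Dg n h * (Dg n qq * My W cs))) $$ (i,l)
     = (\<Sum>k\<in>{0..<n}. (\<Prod>j\<in>rs i. W k j) * (h k * (qq k * (\<Prod>j\<in>cs l. W k j))))"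
proof -
  have c: "Dg n qq * My W cs \<in> carrier_mat n n" by (rule mult_carrier_mat) auto
  have c2: "Dg n h * (Dg n qq * My W cs) \<in> carrier_mat n n" by (rule mult_carrier_mat[OF _ c]) auto
  have e: "(Dg n h * (Dg n qq * My W cs)) $$ (k,l) = h k * (qq k * (\<Prod>j\<in>cs l. W k j))" if k: "k < n" for k
    by (simp only: Dg_left[OF c k il(2)] Dg_left[OF My_carrier k il(2)]) (simp add: My_def k il)
  have "(Mx W rs * (Dg n h * (Dg n qq * My W cs))) $$ (i,l)
     = (\<Sum>k\<in>{0..<n}. Mx W rs $$ (i,k) * (Dg n h * (Dg n qq * My W cs)) $$ (k,l))"
    by (rule mult_entry[OF Mx_carrier c2 il])
  also have "\<dots> = (\<Sum>k\<in>{0..<n}. (\<Prod>j\<in>rs i. W k j) * (h k * (qq k * (\<Prod>j\<in>cs l. W k j))))"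
  proof (rule sum.cong[OF refl])
    fix k assume "k \<in> {0..<n}" hence k: "k < n" by simp
    show "Mx W rs $$ (i,k) * (Dg n h * (Dg n qq * My W cs)) $$ (k,l)
      = (\<Prod>j\<in>rs i. W k j) * (h k * (qq k * (\<Prod>j\<in>cs l. W k j)))"
      by (simp only: e[OF k]) (simp add: Mx_def il k)
  qed
  finally show ?thesis .
qed

lemma ident:
  assumes rs: "\<And>i. i < n \<Longrightarrow> rs i \<subseteq> X" and cs: "\<And>l. l < n \<Longrightarrow> cs l \<subseteq> Y" and W: "Wz \<subseteq> Z"
  shows "Mx V rs * (Dg n (\<lambda>k. \<Prod>j\<in>Wz. V k j) * (Dg n q * My V cs))
       = Mx V' rs * (Dg n (\<lambda>k. \<Prod>j\<in>Wz. V' k j) * (Dg n q' * My V' cs))"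
proof (rule eq_matI)
  fix i l assume "i < dim_row (Mx V' rs * (Dg n (\<lambda>k. \<Prod>j\<in>Wz. V' k j) * (Dg n q' * My V' cs)))"
    "l < dim_col (Mx V' rs * (Dg n (\<lambda>k. \<Prod>j\<in>Wz. V' k j) * (Dg n q' * My V' cs)))"
  hence il: "i < n" "l < n" by auto
  have fin: "finite (rs i)" "finite (cs l)" "finite Wz"
    using rs[OF il(1)] cs[OF il(2)] W finX finY finZ by (auto intro: finite_subset)
  have d1: "rs i \<inter> Wz = {}" using rs[OF il(1)] W disjXZ by blast
  have d2: "(rs i \<union> Wz) \<inter> cs l = {}" using rs[OF il(1)] cs[OF il(2)] W disjXY disjYZ by blast
  have split: "(\<Prod>j\<in>rs i \<union> Wz \<union> cs l. U k j) = (\<Prod>j\<in>rs i. U k j) * ((\<Prod>j\<in>Wz. U k j) * (\<Prod>j\<in>cs l. U k j))"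
    for U :: "nat \<Rightarrow> nat \<Rightarrow> real" and k
    using fin d1 d2 by (simp add: prod.union_disjoint mult.assoc)
  have sub: "rs i \<union> Wz \<union> cs l \<subseteq> X \<union> Y \<union> Z" using rs[OF il(1)] cs[OF il(2)] W by blast
  have "(Mx V rs * (Dg n (\<lambda>k. \<Prod>j\<in>Wz. V k j) * (Dg n q * My V cs))) $$ (i,l)
      = (\<Sum>k\<in>{0..<n}. q k * (\<Prod>j\<in>rs i \<union> Wz \<union> cs l. V k j))"
    by (subst entry3[OF il]) (simp add: split mult_ac)
  also have "\<dots> = (\<Sum>k\<in>{0..<n}. q' k * (\<Prod>j\<in>rs i \<union> Wz \<union> cs l. V' k j))"
    by (rule mom[OF sub])
  also have "\<dots> = (Mx V' rs * (Dg n (\<lambda>k. \<Prod>j\<in>Wz. V' k j) * (Dg n q' * My V' cs))) $$ (i,l)"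
    by (subst entry3[OF il]) (simp add: split mult_ac)
  finally show "(Mx V rs * (Dg n (\<lambda>k. \<Prod>j\<in>Wz. V k j) * (Dg n q * My V cs))) $$ (i,l)
     = (Mx V' rs * (Dg n (\<lambda>k. \<Prod>j\<in>Wz. V' k j) * (Dg n q' * My V' cs))) $$ (i,l)" .
qed auto

lemma ident0:
  assumes rs: "\<And>i. i < n \<Longrightarrow> rs i \<subseteq> X" and cs: "\<And>l. l < n \<Longrightarrow> cs l \<subseteq> Y"
  shows "Mx V rs * (Dg n q * My V cs) = Mx V' rs * (Dg n q' * My V' cs)"
  using ident[OF rs cs, where Wz="{}"] by (simp add: Dg_one)


lemma core: "\<exists>\<sigma>. bij_betw \<sigma> {0..<n} {0..<n} \<and>
   (\<forall>k<n. q' k = q (\<sigma> k) \<and> (\<forall>j\<in>X \<union> Y \<union> Z. V' k j = V (\<sigma> k) j))"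
proof -
  define F where "F = Mx V NX"
  define Fp where "Fp = Mx V' NX"
  define R where "R = Dg n q * My V NY"
  define R' where "R' = Dg n q' * My V' NY"
  have cF: "F \<in> carrier_mat n n" and cFp: "Fp \<in> carrier_mat n n" by (auto simp: F_def Fp_def)
  have cR: "R \<in> carrier_mat n n" and cR': "R' \<in> carrier_mat n n"
    by (auto simp: R_def R'_def intro!: mult_carrier_mat)
  have e0: "F * R = Fp * R'" unfolding F_def Fp_def R_def R'_def using ident0[OF NXs NYs] .
  have dF: "det F \<noteq> 0" using detF by (simp add: F_def Mx_def)
  have dR: "det R \<noteq> 0"
  proof -
    have "det (Dg n q) \<noteq> 0" using qnz by (simp add: det_Dg)
    moreover have "det (My V NY) \<noteq> 0" using detG by (simp add: My_def)
    ultimately show ?thesis unfolding R_def by (simp add: det_mult[OF Dg_carrier My_carrier])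
  qed
  have "det (Fp * R') \<noteq> 0" using e0[symmetric] dF dR by (simp add: det_mult[OF cF cR])
  hence dFp: "det Fp \<noteq> 0" and dR': "det R' \<noteq> 0" by (auto simp: det_mult[OF cFp cR'])
  obtain Fi where cFi: "Fi \<in> carrier_mat n n" and FFi: "F * Fi = 1\<^sub>m n" and FiF: "Fi * F = 1\<^sub>m n"
    using inv_ex[OF cF dF] by blast
  define P where "P = Fi * Fp"
  have cP: "P \<in> carrier_mat n n" by (simp add: P_def mult_carrier_mat[OF cFi cFp])
  have solve: "M = P * M'" if "F * M = Fp * M'" "M \<in> carrier_mat n n" "M' \<in> carrier_mat n n" for M M'
  proof -
    have "M = (Fi * F) * M" using FiF that(2) by simp
    also have "\<dots> = Fi * (F * M)" using cFi cF that(2) by (simp add: assoc_mult_mat)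
    also have "\<dots> = Fi * (Fp * M')" using that(1) by simp
    also have "\<dots> = P * M'" using cFi cFp that(3) by (simp add: assoc_mult_mat P_def)
    finally show ?thesis .
  qed
  have eR: "R = P * R'" by (rule solve[OF e0 cR cR'])
  have Fpe: "Fp = F * P"
  proof -
    have "F * P = (F * Fi) * Fp" using cF cFi cFp by (simp add: assoc_mult_mat P_def)
    thus ?thesis using FFi cFp by simp
  qed
  have comm: "Dg n (\<lambda>k. \<Prod>j\<in>Wz. V k j) * P = P * Dg n (\<lambda>k. \<Prod>j\<in>Wz. V' k j)" if Wz: "Wz \<subseteq> Z" for Wz
  proof -
    define Dh where "Dh = Dg n (\<lambda>k. \<Prod>j\<in>Wz. V k j)"
    define Dh' where "Dh' = Dg n (\<lambda>k. \<Prod>j\<in>Wz. V' k j)"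
    have cDh: "Dh \<in> carrier_mat n n" "Dh' \<in> carrier_mat n n" by (auto simp: Dh_def Dh'_def)
    have eW: "F * (Dh * R) = Fp * (Dh' * R')"
      unfolding F_def Fp_def Dh_def Dh'_def R_def R'_def using ident[OF NXs NYs Wz] .
    have e1: "Dh * R = P * (Dh' * R')"
      by (rule solve[OF eW]) (use cDh cR cR' in \<open>auto intro!: mult_carrier_mat\<close>)
    have "(Dh * P) * R' = Dh * (P * R')" using cDh cP cR' by (simp add: assoc_mult_mat)
    also have "\<dots> = P * (Dh' * R')" using eR e1 by simp
    also have "\<dots> = (P * Dh') * R'" using cDh cP cR' by (simp add: assoc_mult_mat)
    finally have "(Dh * P) * R' = (P * Dh') * R'" .
    hence "Dh * P = P * Dh'"
      by (rule cancel_right[rotated 3, OF dR']) (use cDh cP cR' in \<open>auto intro!: mult_carrier_mat\<close>)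
    thus ?thesis by (simp add: Dh_def Dh'_def)
  qed
  have Pent: "V i j = V' k j" if "i < n" "k < n" "j \<in> Z" "P $$ (i,k) \<noteq> 0" for i k j
  proof -
    have "(Dg n (\<lambda>k. \<Prod>j\<in>{j}. V k j) * P) $$ (i,k) = (P * Dg n (\<lambda>k. \<Prod>j\<in>{j}. V' k j)) $$ (i,k)"
      using comm[of "{j}"] that(3) by simp
    hence "V i j * P $$ (i,k) = P $$ (i,k) * V' k j"
      by (simp only: Dg_left[OF cP that(1,2)] Dg_right[OF cP that(2,1)]) simp
    thus ?thesis using that(4) by simp
  qed
  have dP: "det P \<noteq> 0"
  proof -
    have "det Fi * det F = 1" using arg_cong[OF FiF, of det] by (simp add: det_mult[OF cFi cF])
    hence "det Fi \<noteq> 0" by auto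
    thus ?thesis using dFp by (simp add: P_def det_mult[OF cFi cFp])
  qed
  have uniq: "i = i'" if u: "i < n" "i' < n" "k < n" "P $$ (i,k) \<noteq> 0" "P $$ (i',k) \<noteq> 0" for i i' k
  proof (rule ccontr)
    assume "i \<noteq> i'"
    then obtain j where "j \<in> Z" "V i j \<noteq> V i' j" using Zd[OF u(1,2)] by blast
    thus False using Pent[of i k j] Pent[of i' k j] u by auto
  qed
  define \<sigma> where "\<sigma> k = (THE i. i < n \<and> P $$ (i,k) \<noteq> 0)" for k
  have \<sigma>: "\<sigma> k < n \<and> P $$ (\<sigma> k, k) \<noteq> 0" if k: "k < n" for k
  proof -
    have "\<exists>!i. i < n \<and> P $$ (i,k) \<noteq> 0"
      using det_col_nonzero[OF cP dP k] uniq k by blast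
    thus ?thesis unfolding \<sigma>_def by (rule theI')
  qed
  have \<sigma>u: "i = \<sigma> k" if "i < n" "k < n" "P $$ (i,k) \<noteq> 0" for i k
    using uniq[of i "\<sigma> k" k] \<sigma>[OF that(2)] that by auto
  have P1: "P $$ (\<sigma> k, k) = 1" if k: "k < n" for k
  proof -
    have "Fp $$ (i0, k) = 1" using i0 k by (simp add: Fp_def Mx_def)
    also have "Fp $$ (i0, k) = (\<Sum>m\<in>{0..<n}. F $$ (i0,m) * P $$ (m,k))"
      unfolding Fpe by (rule mult_entry[OF cF cP i0(1) k])
    also have "\<dots> = (\<Sum>m\<in>{0..<n}. if m = \<sigma> k then P $$ (\<sigma> k,k) else 0)"
    proof (rule sum.cong[OF refl])
      fix m assume "m \<in> {0..<n}" hence m: "m < n" by simp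
      have "F $$ (i0,m) = 1" using i0 m by (simp add: F_def Mx_def)
      thus "F $$ (i0,m) * P $$ (m,k) = (if m = \<sigma> k then P $$ (\<sigma> k,k) else 0)"
        using \<sigma>u[OF m k] by auto
    qed
    also have "\<dots> = P $$ (\<sigma> k, k)" using \<sigma>[OF k] by simp
    finally show ?thesis by simp
  qed
  have Pform: "P $$ (i,k) = (if i = \<sigma> k then 1 else 0)" if "i < n" "k < n" for i k
  proof (cases "i = \<sigma> k")
    case True thus ?thesis using P1[OF that(2)] by simp
  next
    case False
    hence "P $$ (i,k) = 0" using \<sigma>u[OF that] by blast
    thus ?thesis using False by simp
  qed
  have surj: "\<sigma> ` {0..<n} = {0..<n}"
  proof
    show "\<sigma> ` {0..<n} \<subseteq> {0..<n}" using \<sigma> by auto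
    show "{0..<n} \<subseteq> \<sigma> ` {0..<n}"
    proof
      fix i assume "i \<in> {0..<n}" hence i: "i < n" by simp
      then obtain k where k: "k < n" "P $$ (i,k) \<noteq> 0" using det_row_nonzero[OF cP dP] by blast
      have "i = \<sigma> k" using \<sigma>u[OF i k] .
      thus "i \<in> \<sigma> ` {0..<n}" using k(1) by simp
    qed
  qed
  have "card (\<sigma> ` {0..<n}) = card {0..<n}" by (simp only: surj)
  hence inj: "inj_on \<sigma> {0..<n}" by (rule eq_card_imp_inj_on[OF finite_atLeastLessThan])
  have bij: "bij_betw \<sigma> {0..<n} {0..<n}" using inj surj by (simp add: bij_betw_def)
  have Prow: "P $$ (\<sigma> k, m) = (if m = k then 1 else 0)" if "k < n" "m < n" for k m
  proof -
    have "P $$ (\<sigma> k, m) = (if \<sigma> k = \<sigma> m then 1 else 0)"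
      using Pform[of "\<sigma> k" m] \<sigma>[OF that(1)] that(2) by simp
    moreover have "(\<sigma> k = \<sigma> m) = (k = m)"
      using inj_onD[OF inj, of k m] that by auto
    ultimately show ?thesis by simp
  qed
  have Yent: "q (\<sigma> k) * (\<Prod>j\<in>C. V (\<sigma> k) j) = q' k * (\<Prod>j\<in>C. V' k j)" if C: "C \<subseteq> Y" and k: "k < n" for C k
  proof -
    have cM: "Dg n q * My V (\<lambda>_. C) \<in> carrier_mat n n" and cM': "Dg n q' * My V' (\<lambda>_. C) \<in> carrier_mat n n"
      by (auto intro!: mult_carrier_mat)
    have "F * (Dg n q * My V (\<lambda>_. C)) = Fp * (Dg n q' * My V' (\<lambda>_. C))"
      unfolding F_def Fp_def using ident0[OF NXs, where cs="\<lambda>_. C"] C by simp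
    hence e: "Dg n q * My V (\<lambda>_. C) = P * (Dg n q' * My V' (\<lambda>_. C))" by (rule solve[OF _ cM cM'])
    have sk: "\<sigma> k < n" using \<sigma>[OF k] by simp
    have "q (\<sigma> k) * (\<Prod>j\<in>C. V (\<sigma> k) j) = (Dg n q * My V (\<lambda>_. C)) $$ (\<sigma> k, i0)"
      by (simp only: Dg_left[OF My_carrier sk i0(1)]) (simp add: My_def sk i0)
    also have "\<dots> = (\<Sum>m\<in>{0..<n}. P $$ (\<sigma> k, m) * (Dg n q' * My V' (\<lambda>_. C)) $$ (m, i0))"
      unfolding e by (rule mult_entry[OF cP cM' sk i0(1)])
    also have "\<dots> = (\<Sum>m\<in>{0..<n}. if m = k then (Dg n q' * My V' (\<lambda>_. C)) $$ (k, i0) else 0)"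
      by (rule sum.cong[OF refl]) (simp add: Prow k)
    also have "\<dots> = (Dg n q' * My V' (\<lambda>_. C)) $$ (k, i0)" using k by simp
    also have "\<dots> = q' k * (\<Prod>j\<in>C. V' k j)"
      by (simp only: Dg_left[OF My_carrier k i0(1)]) (simp add: My_def k i0)
    finally show ?thesis .
  qed
  have qeq: "q' k = q (\<sigma> k)" if "k < n" for k using Yent[of "{}" k] that by simp
  have Yeq: "V' k j = V (\<sigma> k) j" if "k < n" "j \<in> Y" for k j
  proof -
    have "q (\<sigma> k) * V (\<sigma> k) j = q' k * V' k j" using Yent[of "{j}" k] that by simp
    moreover have "q (\<sigma> k) \<noteq> 0" using qnz \<sigma> that(1) by blast
    ultimately show ?thesis using qeq[OF that(1)] by simp
  qed
  have Xeq: "V' k j = V (\<sigma> k) j" if k: "k < n" and j: "j \<in> X" for k j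
  proof -
    define Rj where "Rj = Mx V (\<lambda>_. {j})"
    define Rj' where "Rj' = Mx V' (\<lambda>_. {j})"
    have cRj: "Rj \<in> carrier_mat n n" "Rj' \<in> carrier_mat n n" by (auto simp: Rj_def Rj'_def)
    have "Rj * R = Rj' * R'" unfolding Rj_def Rj'_def R_def R'_def
      using ident0[OF _ NYs, where rs="\<lambda>_. {j}"] j by simp
    hence "(Rj * P) * R' = Rj' * R'" using cRj cP cR' eR by (simp add: assoc_mult_mat)
    hence e: "Rj * P = Rj'"
      by (rule cancel_right[rotated 3, OF dR']) (use cRj cP cR' in \<open>auto intro!: mult_carrier_mat\<close>)
    have "V' k j = Rj' $$ (i0, k)" using k i0 by (simp add: Rj'_def Mx_def)
    also have "\<dots> = (\<Sum>m\<in>{0..<n}. Rj $$ (i0, m) * P $$ (m, k))"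
      unfolding e[symmetric] by (rule mult_entry[OF cRj(1) cP i0(1) k])
    also have "\<dots> = (\<Sum>m\<in>{0..<n}. if m = \<sigma> k then V (\<sigma> k) j else 0)"
      by (rule sum.cong[OF refl]) (auto simp: Pform k Rj_def Mx_def i0)
    also have "\<dots> = V (\<sigma> k) j" using \<sigma>[OF k] by simp
    finally show ?thesis .
  qed
  have Zeq: "V' k j = V (\<sigma> k) j" if "k < n" "j \<in> Z" for k j
    using Pent[of "\<sigma> k" k j] \<sigma>[OF that(1)] that by simp
  show ?thesis using bij qeq Xeq Yeq Zeq by blast
qed

end



lemma perm_sub: "\<alpha> \<in> perm K E \<Longrightarrow> \<alpha> \<subseteq> {0..<K}"
  by (simp add: perm_def)

lemma finite_perm: "finite (perm K E)"
proof -
  have "perm K E \<subseteq> Pow {0..<K}" by (auto simp: perm_def)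
  thus ?thesis by (rule finite_subset) simp
qed

lemma top_perm: "is_hierarchy K E \<Longrightarrow> {0..<K} \<in> perm K E"
  by (auto simp: perm_def is_hierarchy_def)

lemma perm_Int: "\<alpha> \<in> perm K E \<Longrightarrow> \<alpha>' \<in> perm K E \<Longrightarrow> \<alpha> \<inter> \<alpha>' \<in> perm K E"
  by (auto simp: perm_def)

lemma vt_parts:
  assumes "valid_theta J K Q E \<theta>"
  shows "\<And>j \<alpha>. j < J \<Longrightarrow> \<alpha> \<in> perm K E \<Longrightarrow> 0 < \<theta> j \<alpha> \<and> \<theta> j \<alpha> < 1"
    and "\<And>j \<alpha> \<alpha>'. j < J \<Longrightarrow> \<alpha> \<in> perm K E \<Longrightarrow> \<alpha>' \<in> perm K E \<Longrightarrow> Q j \<subseteq> \<alpha> \<Longrightarrow> Q j \<subseteq> \<alpha>' \<Longrightarrow> \<theta> j \<alpha> = \<theta> j \<alpha>'"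
    and "\<And>j \<alpha> \<alpha>'. j < J \<Longrightarrow> \<alpha> \<in> perm K E \<Longrightarrow> \<alpha>' \<in> perm K E \<Longrightarrow> Q j \<subseteq> \<alpha> \<Longrightarrow> \<not> Q j \<subseteq> \<alpha>' \<Longrightarrow> \<theta> j \<alpha> > \<theta> j \<alpha>'"
proof -
  note d = assms[unfolded valid_theta_def]
  note d1 = conjunct1[OF d] and d2 = conjunct1[OF conjunct2[OF d]] and d3 = conjunct2[OF conjunct2[OF d]]
  show "\<And>j \<alpha>. j < J \<Longrightarrow> \<alpha> \<in> perm K E \<Longrightarrow> 0 < \<theta> j \<alpha> \<and> \<theta> j \<alpha> < 1"
    using d1 by simp
  show "\<And>j \<alpha> \<alpha>'. j < J \<Longrightarrow> \<alpha> \<in> perm K E \<Longrightarrow> \<alpha>' \<in> perm K E \<Longrightarrow> Q j \<subseteq> \<alpha> \<Longrightarrow> Q j \<subseteq> \<alpha>' \<Longrightarrow> \<theta> j \<alpha> = \<theta> j \<alpha>'"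
    using d2 by blast
  show "\<And>j \<alpha> \<alpha>'. j < J \<Longrightarrow> \<alpha> \<in> perm K E \<Longrightarrow> \<alpha>' \<in> perm K E \<Longrightarrow> Q j \<subseteq> \<alpha> \<Longrightarrow> \<not> Q j \<subseteq> \<alpha>' \<Longrightarrow> \<theta> j \<alpha> > \<theta> j \<alpha>'"
    using d3 by blast
qed

lemma vt_le:
  assumes "valid_theta J K Q E \<theta>" "is_hierarchy K E" "j < J" "Q j \<subseteq> {0..<K}" "\<alpha> \<in> perm K E"
  shows "\<theta> j \<alpha> \<le> \<theta> j {0..<K}"
proof (cases "Q j \<subseteq> \<alpha>")
  case True thus ?thesis using vt_parts(2)[OF assms(1,3,5) top_perm[OF assms(2)] True assms(4)] by simp
next
  case False thus ?thesis using vt_parts(3)[OF assms(1,3) top_perm[OF assms(2)] assms(5) assms(4) False] by simp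
qed

lemma vt_gam:
  assumes "valid_theta J K Q E \<theta>" "is_hierarchy K E" "j < J" "Q j \<subseteq> {0..<K}" "\<alpha> \<in> perm K E"
  shows "Q j \<subseteq> \<alpha> \<longleftrightarrow> \<theta> j \<alpha> = \<theta> j {0..<K}"
proof (cases "Q j \<subseteq> \<alpha>")
  case True thus ?thesis using vt_parts(2)[OF assms(1,3,5) top_perm[OF assms(2)] True assms(4)] by simp
next
  case False thus ?thesis using vt_parts(3)[OF assms(1,3) top_perm[OF assms(2)] assms(5) assms(4) False] by simp
qed

lemma vt_neq:
  assumes "valid_theta J K Q E \<theta>" "j < J" "\<alpha> \<in> perm K E" "\<alpha>' \<in> perm K E"
    "(Q j \<subseteq> \<alpha>) \<noteq> (Q j \<subseteq> \<alpha>')"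
  shows "\<theta> j \<alpha> \<noteq> \<theta> j \<alpha>'"
proof (cases "Q j \<subseteq> \<alpha>")
  case True thus ?thesis using vt_parts(3)[OF assms(1-4) True] assms(5) by auto
next
  case False thus ?thesis using vt_parts(3)[OF assms(1,2,4,3) _ False] assms(5) by auto
qed

lemma lcbn_pos:
  assumes "valid_t K t" "\<alpha> \<in> perm K E"
  shows "lcbn_prob K E t \<alpha> > 0"
  using assms unfolding lcbn_prob_def valid_t_def
  by (auto intro!: prod_pos)

lemma E_sub:
  assumes H: "is_hierarchy K E" "is_hierarchy K E'" and P: "perm K E = perm K E'"
  shows "E \<subseteq> E'"
proof
  fix x assume x: "x \<in> E"
  obtain k l where kl: "x = (k,l)" by (cases x)
  have lK: "l < K" using H(1) x kl by (auto simp: is_hierarchy_def)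
  define D where "D = insert l {k'. (k',l) \<in> E'}"
  have "D \<in> perm K E'"
    unfolding perm_def D_def using H(2) lK
    by (auto simp: is_hierarchy_def trans_def)
  hence "D \<in> perm K E" using P by simp
  hence "k \<in> D" using x kl unfolding perm_def D_def by auto
  moreover have "k \<noteq> l" using H(1) x kl by (auto simp: is_hierarchy_def irrefl_def)
  ultimately show "x \<in> E'" using kl D_def by auto
qed

definition fct :: "(nat \<times> nat) set \<Rightarrow> (nat \<Rightarrow> real) \<Rightarrow> nat set \<Rightarrow> nat \<Rightarrow> real" where
  "fct E t \<alpha> k = (if pa E k \<subseteq> \<alpha> then (if k \<in> \<alpha> then t k else 1 - t k) else 1)"

lemma t_ident:
  assumes H: "is_hierarchy K E" "valid_t K t" "valid_t K t'"
    and P: "\<forall>\<alpha>\<in>perm K E. lcbn_prob K E t \<alpha> = lcbn_prob K E t' \<alpha>"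
  shows "k < K \<Longrightarrow> t' k = t k"
proof (induction k rule: measure_induct_rule[where f="\<lambda>k. card {l. (k,l) \<in> E}"])
  case (less k)
  define De where "De = {l. (k,l) \<in> E}"
  define \<alpha> where "\<alpha> = {0..<K} - De"
  define \<beta> where "\<beta> = {0..<K} - insert k De"
  have EK: "E \<subseteq> {0..<K} \<times> {0..<K}" and irr: "\<And>a. (a,a) \<notin> E" and tr: "\<And>a b c. (a,b) \<in> E \<Longrightarrow> (b,c) \<in> E \<Longrightarrow> (a,c) \<in> E"
    using H(1) unfolding is_hierarchy_def irrefl_def trans_def by blast+
  have DeK: "De \<subseteq> {0..<K}" using EK by (auto simp: De_def)
  have finDe: "finite De" using DeK by (rule finite_subset) simp
  have kDe: "k \<notin> De" using irr by (auto simp: De_def)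
  have \<alpha>p: "\<alpha> \<in> perm K E"
    unfolding perm_def \<alpha>_def De_def using EK tr by blast
  have \<beta>p: "\<beta> \<in> perm K E"
    unfolding perm_def \<beta>_def De_def using EK tr by blast
  have lc: "lcbn_prob K E tt \<gamma> = (\<Prod>k'\<in>{0..<K}. fct E tt \<gamma> k')" if "\<gamma> \<in> perm K E" for tt \<gamma>
    using that by (simp add: lcbn_prob_def fct_def)
  have split: "(\<Prod>k'\<in>{0..<K}. g k') = (\<Prod>k'\<in>\<beta>. g k') * (g k * (\<Prod>k'\<in>De. g k'))" for g :: "nat \<Rightarrow> real"
  proof -
    have sub: "insert k De \<subseteq> {0..<K}" using DeK less.prems by auto
    have "(\<Prod>k'\<in>{0..<K}. g k') = (\<Prod>k'\<in>{0..<K} - insert k De. g k') * (\<Prod>k'\<in>insert k De. g k')"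
      by (rule prod.subset_diff[OF sub]) simp
    thus ?thesis using finDe kDe by (simp add: \<beta>_def)
  qed
  have paB: "pa E k' \<subseteq> \<beta>" if "k' \<in> \<beta>" for k'
    using that EK tr unfolding pa_def \<beta>_def De_def by blast
  have paK: "pa E k \<subseteq> \<beta>"
    using EK tr irr less.prems unfolding pa_def \<beta>_def De_def by blast
  have fb: "fct E tt \<alpha> k' = tt k'" "fct E tt \<beta> k' = tt k'" if "k' \<in> \<beta>" for tt k'
    using paB[OF that] that unfolding fct_def \<alpha>_def \<beta>_def by auto
  have fk: "fct E tt \<alpha> k = tt k" "fct E tt \<beta> k = 1 - tt k" for tt
    using paK kDe less.prems unfolding fct_def \<alpha>_def \<beta>_def by auto
  have fD: "fct E tt \<beta> k' = 1" if "k' \<in> De" for tt k'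
    using that unfolding fct_def \<beta>_def pa_def De_def by auto
  have IH: "t' k' = t k'" if "k' \<in> De" for k'
  proof (rule less.IH)
    show "k' < K" using that DeK by auto
    have "{l. (k',l) \<in> E} \<subseteq> De" using that tr by (auto simp: De_def)
    moreover have "k' \<notin> {l. (k',l) \<in> E}" using irr by auto
    ultimately have "{l. (k',l) \<in> E} \<subset> De" using that by blast
    thus "card {l. (k',l) \<in> E} < card {l. (k,l) \<in> E}"
      using psubset_card_mono[OF finDe] by (simp add: De_def)
  qed
  have fDe: "fct E t' \<alpha> k' = fct E t \<alpha> k'" if "k' \<in> De" for k'
    using IH[OF that] by (simp add: fct_def)
  define a where "a = (\<Prod>k'\<in>\<beta>. t k')"
  define a' where "a' = (\<Prod>k'\<in>\<beta>. t' k')"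
  define d where "d = (\<Prod>k'\<in>De. fct E t \<alpha> k')"
  have tpos: "\<And>k'. k' < K \<Longrightarrow> 0 < t k' \<and> t k' < 1" using H(2) by (simp add: valid_t_def)
  have apos: "a > 0" unfolding a_def \<beta>_def using tpos by (auto intro!: prod_pos)
  have dpos: "d > 0" unfolding d_def fct_def using tpos DeK by (auto intro!: prod_pos)
  have pa1: "lcbn_prob K E t \<alpha> = a * (t k * d)"
    using lc[OF \<alpha>p] split fb(1) fk(1) by (simp add: a_def d_def)
  have pa2: "lcbn_prob K E t' \<alpha> = a' * (t' k * d)"
  proof -
    have "(\<Prod>k'\<in>De. fct E t' \<alpha> k') = d" unfolding d_def using fDe by (rule prod.cong[OF refl])
    thus ?thesis using lc[OF \<alpha>p] split fb(1) fk(1) by (simp add: a'_def)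
  qed
  have pb1: "lcbn_prob K E t \<beta> = a * (1 - t k)"
    using lc[OF \<beta>p] split fb(2) fk(2) fD by (simp add: a_def)
  have pb2: "lcbn_prob K E t' \<beta> = a' * (1 - t' k)"
    using lc[OF \<beta>p] split fb(2) fk(2) fD by (simp add: a'_def)
  have e1: "a * t k = a' * t' k" using P \<alpha>p pa1 pa2 dpos by auto
  have e2: "a * (1 - t k) = a' * (1 - t' k)" using P \<beta>p pb1 pb2 by auto
  have "a = a'" using e1 e2 by (simp add: algebra_simps)
  thus ?case using e1 apos by simp
qed



lemma expand:
  fixes th s :: "nat \<Rightarrow> real"
  assumes c: "c \<subseteq> {0..<J}"
  shows "(\<Prod>j\<in>c. th j - s j) = (\<Sum>r\<in>Pow {0..<J}.
      (\<Prod>j\<in>{0..<J}. if j \<in> r then (if j \<in> c then 1 - s j else 1) else (if j \<in> c then - s j else 1))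
      * (\<Prod>j\<in>{0..<J}. if j \<in> r then th j else 1 - th j))"
proof -
  define u where "u j = (if j \<in> c then 1 - s j else 1)" for j
  define v where "v j = (if j \<in> c then - s j else 1)" for j
  have "(\<Prod>j\<in>c. th j - s j) = (\<Prod>j\<in>{0..<J}. if j \<in> c then th j - s j else 1)"
    using c by (simp add: prod.If_cases Int_absorb1)
  also have "\<dots> = (\<Prod>j\<in>{0..<J}. th j * u j + (1 - th j) * v j)"
    by (rule prod.cong[OF refl]) (auto simp: u_def v_def algebra_simps)
  also have "\<dots> = (\<Sum>r\<in>Pow {0..<J}. (\<Prod>j\<in>r. th j * u j) * (\<Prod>j\<in>{0..<J} - r. (1 - th j) * v j))"
    by (rule prod_add) simp
  also have "\<dots> = (\<Sum>r\<in>Pow {0..<J}. (\<Prod>j\<in>{0..<J}. if j \<in> r then u j else v j)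
      * (\<Prod>j\<in>{0..<J}. if j \<in> r then th j else 1 - th j))"
  proof (rule sum.cong[OF refl])
    fix r assume "r \<in> Pow {0..<J}"
    hence r: "r \<subseteq> {0..<J}" by simp
    have i1: "{0..<J} \<inter> r = r" "{0..<J} \<inter> - r = {0..<J} - r" using r by auto
    have "(\<Prod>j\<in>r. th j * u j) * (\<Prod>j\<in>{0..<J} - r. (1 - th j) * v j)
        = (\<Prod>j\<in>{0..<J}. if j \<in> r then th j * u j else (1 - th j) * v j)"
      by (simp add: prod.If_cases i1)
    also have "\<dots> = (\<Prod>j\<in>{0..<J}. (if j \<in> r then u j else v j) * (if j \<in> r then th j else 1 - th j))"
      by (rule prod.cong[OF refl]) simp
    also have "\<dots> = (\<Prod>j\<in>{0..<J}. if j \<in> r then u j else v j) * (\<Prod>j\<in>{0..<J}. if j \<in> r then th j else 1 - th j)"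
      by (rule prod.distrib)
    finally show "(\<Prod>j\<in>r. th j * u j) * (\<Prod>j\<in>{0..<J} - r. (1 - th j) * v j)
        = (\<Prod>j\<in>{0..<J}. if j \<in> r then u j else v j) * (\<Prod>j\<in>{0..<J}. if j \<in> r then th j else 1 - th j)" .
  qed
  finally show ?thesis unfolding u_def v_def .
qed

lemma GI:
  fixes \<theta> \<theta>' :: "nat \<Rightarrow> nat set \<Rightarrow> real" and s :: "nat \<Rightarrow> real"
  assumes eq: "\<forall>r\<subseteq>{0..<J}. resp_prob J K E \<theta> t r = resp_prob J K E' \<theta>' t' r"
    and c: "c \<subseteq> {0..<J}"
  shows "(\<Sum>\<alpha>\<in>perm K E. lcbn_prob K E t \<alpha> * (\<Prod>j\<in>c. \<theta> j \<alpha> - s j))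
       = (\<Sum>\<alpha>\<in>perm K E'. lcbn_prob K E' t' \<alpha> * (\<Prod>j\<in>c. \<theta>' j \<alpha> - s j))"
proof -
  define w where "w r = (\<Prod>j\<in>{0..<J}. if j \<in> r then (if j \<in> c then 1 - s j else 1) else (if j \<in> c then - s j else 1))" for r
  have gen: "(\<Sum>\<alpha>\<in>perm K EE. lcbn_prob K EE tt \<alpha> * (\<Prod>j\<in>c. th j \<alpha> - s j))
     = (\<Sum>r\<in>Pow {0..<J}. w r * resp_prob J K EE th tt r)" for EE tt and th :: "nat \<Rightarrow> nat set \<Rightarrow> real"
  proof -
    have "(\<Sum>\<alpha>\<in>perm K EE. lcbn_prob K EE tt \<alpha> * (\<Prod>j\<in>c. th j \<alpha> - s j))
      = (\<Sum>\<alpha>\<in>perm K EE. lcbn_prob K EE tt \<alpha> * (\<Sum>r\<in>Pow {0..<J}. w r * (\<Prod>j\<in>{0..<J}. if j \<in> r then th j \<alpha> else 1 - th j \<alpha>)))"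
      unfolding w_def by (rule sum.cong[OF refl]) (simp only: expand[OF c, of "\<lambda>j. th j _" s])
    also have "\<dots> = (\<Sum>\<alpha>\<in>perm K EE. \<Sum>r\<in>Pow {0..<J}. w r * (lcbn_prob K EE tt \<alpha> * (\<Prod>j\<in>{0..<J}. if j \<in> r then th j \<alpha> else 1 - th j \<alpha>)))"
      by (simp add: sum_distrib_left mult_ac)
    also have "\<dots> = (\<Sum>r\<in>Pow {0..<J}. \<Sum>\<alpha>\<in>perm K EE. w r * (lcbn_prob K EE tt \<alpha> * (\<Prod>j\<in>{0..<J}. if j \<in> r then th j \<alpha> else 1 - th j \<alpha>)))"
      by (rule sum.swap)
    also have "\<dots> = (\<Sum>r\<in>Pow {0..<J}. w r * resp_prob J K EE th tt r)"
      by (simp add: resp_prob_def sum_distrib_left)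
    finally show ?thesis .
  qed
  show ?thesis unfolding gen using eq by (intro sum.cong) auto
qed



lemma det_tri:
  fixes ap :: "nat \<Rightarrow> nat set" and \<theta> :: "nat \<Rightarrow> nat set \<Rightarrow> real" and s :: "nat \<Rightarrow> real"
  assumes bij: "bij_betw ap {0..<n} A"
    and gam: "\<And>j \<alpha>. j \<in> S \<Longrightarrow> \<alpha> \<in> A \<Longrightarrow> (Q j \<subseteq> \<alpha> \<longleftrightarrow> \<theta> j \<alpha> = s j)"
    and dist: "\<And>\<alpha> \<alpha>'. \<alpha> \<in> A \<Longrightarrow> \<alpha>' \<in> A \<Longrightarrow> (\<forall>j\<in>S. (Q j \<subseteq> \<alpha>) = (Q j \<subseteq> \<alpha>')) \<Longrightarrow> \<alpha> = \<alpha>'"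
    and finS: "finite S"
  shows "det (mat n n (\<lambda>(i,k). \<Prod>j\<in>{j\<in>S. \<not> Q j \<subseteq> ap i}. \<theta> j (ap k) - s j)) \<noteq> 0"
proof
  define M where "M = mat n n (\<lambda>(i,k). \<Prod>j\<in>{j\<in>S. \<not> Q j \<subseteq> ap i}. \<theta> j (ap k) - s j)"
  have cM: "M \<in> carrier_mat n n" by (simp add: M_def)
  assume "det (mat n n (\<lambda>(i,k). \<Prod>j\<in>{j\<in>S. \<not> Q j \<subseteq> ap i}. \<theta> j (ap k) - s j)) = 0"
  hence "det M = 0" by (simp add: M_def)
  then obtain v where v: "v \<in> carrier_vec n" "v \<noteq> 0\<^sub>v n" "M *\<^sub>v v = 0\<^sub>v n"
    using det_0_iff_vec_prod_zero[OF cM] by blast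
  have "\<exists>k. k < n \<and> v $ k \<noteq> 0"
  proof (rule ccontr)
    assume "\<not> ?thesis"
    hence "v = 0\<^sub>v n" using v(1) by (intro eq_vecI) auto
    thus False using v(2) by simp
  qed
  then obtain k0 where "k0 < n \<and> v $ k0 \<noteq> 0" by blast
  define Ms where "Ms i = {j\<in>S. Q j \<subseteq> ap i}" for i
  obtain k where k: "k < n \<and> v $ k \<noteq> 0" and kmin: "\<And>l. l < n \<and> v $ l \<noteq> 0 \<Longrightarrow> card (Ms k) \<le> card (Ms l)"
    using ex_has_least_nat[of "\<lambda>k. k < n \<and> v $ k \<noteq> 0" k0 "\<lambda>k. card (Ms k)"] \<open>k0 < n \<and> v $ k0 \<noteq> 0\<close> by blast
  have apA: "\<And>i. i < n \<Longrightarrow> ap i \<in> A" using bij by (auto simp: bij_betw_def)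
  have inj: "\<And>i i'. i < n \<Longrightarrow> i' < n \<Longrightarrow> ap i = ap i' \<Longrightarrow> i = i'"
    using bij by (auto simp: bij_betw_def inj_on_def)
  have finN: "finite {j\<in>S. \<not> Q j \<subseteq> ap i}" for i using finS by simp
  have zero: "M $$ (k,l) * v $ l = 0" if l: "l < n" "l \<noteq> k" for l
  proof (rule ccontr)
    assume "M $$ (k,l) * v $ l \<noteq> 0"
    hence Mne: "M $$ (k,l) \<noteq> 0" and vl: "v $ l \<noteq> 0" by auto
    have "\<forall>j\<in>{j\<in>S. \<not> Q j \<subseteq> ap k}. \<theta> j (ap l) - s j \<noteq> 0"
      using Mne k l finN[of k] by (simp add: M_def) blast
    hence "\<forall>j\<in>S. \<not> Q j \<subseteq> ap k \<longrightarrow> \<not> Q j \<subseteq> ap l" using gam apA l by auto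
    hence sub: "Ms l \<subseteq> Ms k" by (auto simp: Ms_def)
    have "card (Ms k) \<le> card (Ms l)" using kmin l vl by blast
    moreover have "finite (Ms k)" using finS by (simp add: Ms_def)
    moreover have "card (Ms l) \<le> card (Ms k)" using sub by (rule card_mono[OF calculation(2)])
    ultimately have "card (Ms l) = card (Ms k)" by simp
    hence "Ms l = Ms k" using sub \<open>finite (Ms k)\<close> by (intro card_subset_eq) auto
    hence "\<forall>j\<in>S. (Q j \<subseteq> ap l) = (Q j \<subseteq> ap k)" by (auto simp: Ms_def set_eq_iff)
    hence "ap l = ap k" using dist apA l k by blast
    thus False using inj l k by blast
  qed
  have diag: "M $$ (k,k) \<noteq> 0"
  proof -
    have "\<forall>j\<in>{j\<in>S. \<not> Q j \<subseteq> ap k}. \<theta> j (ap k) - s j \<noteq> 0" using gam apA k by auto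
    thus ?thesis using k finN[of k] by (simp add: M_def)
  qed
  have "(M *\<^sub>v v) $ k = (\<Sum>l\<in>{0..<n}. M $$ (k,l) * v $ l)"
    using cM v(1) k by (simp add: scalar_prod_def)
  also have "\<dots> = M $$ (k,k) * v $ k + (\<Sum>l\<in>{0..<n} - {k}. M $$ (k,l) * v $ l)"
    using k by (subst sum.remove[of _ k]) auto
  also have "(\<Sum>l\<in>{0..<n} - {k}. M $$ (k,l) * v $ l) = 0"
    using zero by (intro sum.neutral) auto
  finally have "(M *\<^sub>v v) $ k \<noteq> 0" using diag k by simp
  thus False using v(3) k by simp
qed



theorem theoremS1:
  fixes J K :: nat and Q :: "nat \<Rightarrow> nat set" and E :: "(nat \<times> nat) set"
    and \<theta> :: "nat \<Rightarrow> nat set \<Rightarrow> real" and t :: "nat \<Rightarrow> real"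
    and S1 S2 :: "nat set"
  assumes Q: "\<forall>j<J. Q j \<subseteq> {0..<K}"
    and E: "is_hierarchy K E"
    and par: "valid_theta J K Q E \<theta>" "valid_t K t"
    and S: "S1 \<subseteq> {0..<J}" "S2 \<subseteq> {0..<J}" "S1 \<inter> S2 = {}"
    and A1: "\<forall>\<alpha>\<in>perm K E. \<forall>\<alpha>'\<in>perm K E. (\<forall>j\<in>S1. Gam Q j \<alpha> = Gam Q j \<alpha>') \<longrightarrow> \<alpha> = \<alpha>'"
    and A2: "\<forall>\<alpha>\<in>perm K E. \<forall>\<alpha>'\<in>perm K E. (\<forall>j\<in>S2. Gam Q j \<alpha> = Gam Q j \<alpha>') \<longrightarrow> \<alpha> = \<alpha>'"
    and A3: "\<forall>\<alpha>\<in>perm K E. \<forall>\<alpha>'\<in>perm K E. geS Q S1 \<alpha> \<alpha>' \<longleftrightarrow> geS Q S2 \<alpha> \<alpha>'"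
    and B: "\<forall>\<alpha>\<in>perm K E. \<forall>\<alpha>'\<in>perm K E. \<alpha> \<noteq> \<alpha>' \<and> (geS Q S1 \<alpha>' \<alpha> \<or> geS Q S2 \<alpha>' \<alpha>) \<longrightarrow>
              (\<exists>j\<in>{0..<J} - (S1 \<union> S2). Gam Q j \<alpha> \<noteq> Gam Q j \<alpha>')"
    and C: "\<forall>\<alpha>\<in>perm K E. \<forall>\<alpha>'\<in>Pow {0..<K} - perm K E. \<exists>j<J. Gam Q j \<alpha> \<noteq> Gam Q j \<alpha>'"
  shows "\<forall>E' \<theta>' t'. is_hierarchy K E' \<and> card (perm K E') \<le> card (perm K E) \<and>
           valid_theta J K Q E' \<theta>' \<and> valid_t K t' \<and>
           (\<forall>r\<subseteq>{0..<J}. resp_prob J K E \<theta> t r = resp_prob J K E' \<theta>' t' r)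
         \<longrightarrow> E' = E \<and> (\<forall>j<J. \<forall>\<alpha>\<in>perm K E. \<theta>' j \<alpha> = \<theta> j \<alpha>) \<and> (\<forall>k<K. t' k = t k)"
proof (intro allI impI)
  fix E' \<theta>' t'
  assume H: "is_hierarchy K E' \<and> card (perm K E') \<le> card (perm K E) \<and>
           valid_theta J K Q E' \<theta>' \<and> valid_t K t' \<and>
           (\<forall>r\<subseteq>{0..<J}. resp_prob J K E \<theta> t r = resp_prob J K E' \<theta>' t' r)"
  hence E': "is_hierarchy K E'" and cardle: "card (perm K E') \<le> card (perm K E)"
    and vt': "valid_theta J K Q E' \<theta>'" and tt': "valid_t K t'"
    and eq: "\<forall>r\<subseteq>{0..<J}. resp_prob J K E \<theta> t r = resp_prob J K E' \<theta>' t' r" by auto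
  define A where "A = perm K E"
  define A' where "A' = perm K E'"
  define n where "n = card A"
  define n' where "n' = card A'"
  define tp where "tp = {0..<K}"
  have finA: "finite A" "finite A'" by (auto simp: A_def A'_def finite_perm)
  obtain ap where ap: "bij_betw ap {0..<n} A" using ex_bij_betw_nat_finite[OF finA(1)] n_def by blast
  obtain bp where bp: "bij_betw bp {0..<n'} A'" using ex_bij_betw_nat_finite[OF finA(2)] n'_def by blast
  have n'le: "n' \<le> n" using cardle by (simp add: n_def n'_def A_def A'_def)
  have apA: "\<And>i. i < n \<Longrightarrow> ap i \<in> A" using ap by (auto simp: bij_betw_def)
  have bpA: "\<And>k. k < n' \<Longrightarrow> bp k \<in> A'" using bp by (auto simp: bij_betw_def)
  have apS: "\<And>\<alpha>. \<alpha> \<in> A \<Longrightarrow> \<exists>i<n. ap i = \<alpha>" using ap by (force simp: bij_betw_def)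
  have bpS: "\<And>\<alpha>. \<alpha> \<in> A' \<Longrightarrow> \<exists>k<n'. bp k = \<alpha>" using bp by (force simp: bij_betw_def)
  have tpA: "tp \<in> A" "tp \<in> A'" using top_perm[OF E] top_perm[OF E'] by (auto simp: tp_def A_def A'_def)
  define Z where "Z = {0..<J} - (S1 \<union> S2)"
  define s where "s j = (if j \<in> S1 \<union> S2 then \<theta> j tp else 0)" for j
  define V where "V k j = \<theta> j (ap k) - s j" for k j
  define V' where "V' k j = \<theta>' j (bp k) - s j" for k j
  define q where "q k = lcbn_prob K E t (ap k)" for k
  define q' where "q' k = (if k < n' then lcbn_prob K E' t' (bp k) else 0)" for k
  define NX where "NX i = {j\<in>S1. \<not> Q j \<subseteq> ap i}" for i
  define NY where "NY i = {j\<in>S2. \<not> Q j \<subseteq> ap i}" for i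
  obtain i0 where i0: "i0 < n" "ap i0 = tp" using apS tpA(1) by blast
  have gam: "\<And>j \<alpha>. j < J \<Longrightarrow> \<alpha> \<in> A \<Longrightarrow> (Q j \<subseteq> \<alpha> \<longleftrightarrow> \<theta> j \<alpha> = \<theta> j tp)"
    using vt_gam[OF par(1) E] Q by (simp add: A_def tp_def)
  have gam': "\<And>j \<alpha>. j < J \<Longrightarrow> \<alpha> \<in> A' \<Longrightarrow> (Q j \<subseteq> \<alpha> \<longleftrightarrow> \<theta>' j \<alpha> = \<theta>' j tp)"
    using vt_gam[OF vt' E'] Q by (simp add: A'_def tp_def)
  have S1J: "\<And>j. j \<in> S1 \<Longrightarrow> j < J" and S2J: "\<And>j. j \<in> S2 \<Longrightarrow> j < J" using S by auto
  have mom: "\<And>c. c \<subseteq> S1 \<union> S2 \<union> Z \<Longrightarrow>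
      (\<Sum>k\<in>{0..<n}. q k * (\<Prod>j\<in>c. V k j)) = (\<Sum>k\<in>{0..<n}. q' k * (\<Prod>j\<in>c. V' k j))"
  proof -
    fix c assume c: "c \<subseteq> S1 \<union> S2 \<union> Z"
    hence cJ: "c \<subseteq> {0..<J}" using S by (auto simp: Z_def)
    have "(\<Sum>k\<in>{0..<n}. q k * (\<Prod>j\<in>c. V k j)) = (\<Sum>\<alpha>\<in>A. lcbn_prob K E t \<alpha> * (\<Prod>j\<in>c. \<theta> j \<alpha> - s j))"
      unfolding q_def V_def by (rule sum.reindex_bij_betw[OF ap])
    also have "\<dots> = (\<Sum>\<alpha>\<in>A'. lcbn_prob K E' t' \<alpha> * (\<Prod>j\<in>c. \<theta>' j \<alpha> - s j))"
      unfolding A_def A'_def by (rule GI[OF eq cJ])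
    also have "\<dots> = (\<Sum>k\<in>{0..<n'}. lcbn_prob K E' t' (bp k) * (\<Prod>j\<in>c. \<theta>' j (bp k) - s j))"
      by (rule sum.reindex_bij_betw[OF bp, symmetric])
    also have "\<dots> = (\<Sum>k\<in>{0..<n'}. q' k * (\<Prod>j\<in>c. V' k j))"
      by (rule sum.cong[OF refl]) (simp add: q'_def V'_def)
    also have "\<dots> = (\<Sum>k\<in>{0..<n}. q' k * (\<Prod>j\<in>c. V' k j))"
      by (rule sum.mono_neutral_left) (use n'le in \<open>auto simp: q'_def\<close>)
    finally show "(\<Sum>k\<in>{0..<n}. q k * (\<Prod>j\<in>c. V k j)) = (\<Sum>k\<in>{0..<n}. q' k * (\<Prod>j\<in>c. V' k j))" .
  qed
  have d1: "S1 \<inter> S2 = {}" "S1 \<inter> Z = {}" "S2 \<inter> Z = {}" using S by (auto simp: Z_def)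
  have fins: "finite S1" "finite S2" "finite Z" using S by (auto simp: Z_def intro: finite_subset)
  have NXs: "\<And>i. i < n \<Longrightarrow> NX i \<subseteq> S1" and NYs: "\<And>i. i < n \<Longrightarrow> NY i \<subseteq> S2"
    by (auto simp: NX_def NY_def)
  have dist1: "\<And>\<alpha> \<alpha>'. \<alpha> \<in> A \<Longrightarrow> \<alpha>' \<in> A \<Longrightarrow> (\<forall>j\<in>S1. (Q j \<subseteq> \<alpha>) = (Q j \<subseteq> \<alpha>')) \<Longrightarrow> \<alpha> = \<alpha>'"
    using A1 by (simp add: A_def Gam_def)
  have dist2: "\<And>\<alpha> \<alpha>'. \<alpha> \<in> A \<Longrightarrow> \<alpha>' \<in> A \<Longrightarrow> (\<forall>j\<in>S2. (Q j \<subseteq> \<alpha>) = (Q j \<subseteq> \<alpha>')) \<Longrightarrow> \<alpha> = \<alpha>'"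
    using A2 by (simp add: A_def Gam_def)
  have detF: "det (mat n n (\<lambda>(i,k). \<Prod>j\<in>NX i. V k j)) \<noteq> 0"
  proof -
    have "det (mat n n (\<lambda>(i,k). \<Prod>j\<in>{j\<in>S1. \<not> Q j \<subseteq> ap i}. \<theta> j (ap k) - s j)) \<noteq> 0"
      by (rule det_tri[OF ap _ dist1 fins(1)]) (use gam S1J in \<open>auto simp: s_def\<close>)
    thus ?thesis by (simp add: NX_def V_def)
  qed
  have detG: "det (mat n n (\<lambda>(k,l). \<Prod>j\<in>NY l. V k j)) \<noteq> 0"
  proof -
    have "det (mat n n (\<lambda>(i,k). \<Prod>j\<in>{j\<in>S2. \<not> Q j \<subseteq> ap i}. \<theta> j (ap k) - s j)) \<noteq> 0"
      by (rule det_tri[OF ap _ dist2 fins(2)]) (use gam S2J in \<open>auto simp: s_def\<close>)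
    hence "det (mat n n (\<lambda>(i,k). \<Prod>j\<in>NY i. V k j)) \<noteq> 0" by (simp add: NY_def V_def)
    moreover have "mat n n (\<lambda>(k,l). \<Prod>j\<in>NY l. V k j) = transpose_mat (mat n n (\<lambda>(i,k). \<Prod>j\<in>NY i. V k j))"
      by (rule eq_matI) auto
    moreover have "det (transpose_mat (mat n n (\<lambda>(i,k). \<Prod>j\<in>NY i. V k j))) = det (mat n n (\<lambda>(i,k). \<Prod>j\<in>NY i. V k j))"
      by (rule det_transpose[of _ n]) simp
    ultimately show ?thesis by simp
  qed
  have qnz: "q k \<noteq> 0" if "k < n" for k
  proof -
    have "ap k \<in> perm K E" using apA[OF that] by (simp add: A_def)
    hence "lcbn_prob K E t (ap k) > 0" by (rule lcbn_pos[OF par(2)])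
    thus ?thesis by (simp add: q_def)
  qed
  have Bx: "\<exists>j\<in>{0..<J} - (S1 \<union> S2). Gam Q j x \<noteq> Gam Q j y"
    if "x \<in> A" "y \<in> A" "x \<noteq> y" "geS Q S1 y x" for x y
    by (rule B[rule_format]) (use that in \<open>auto simp: A_def\<close>)
  have Cx: "\<exists>j<J. Gam Q j x \<noteq> Gam Q j y" if "x \<in> A" "y \<in> Pow {0..<K} - A" for x y
    by (rule C[rule_format]) (use that in \<open>auto simp: A_def\<close>)
  have Zdist: "\<exists>j\<in>Z. (Q j \<subseteq> \<alpha>) \<noteq> (Q j \<subseteq> \<alpha>')" if a: "\<alpha> \<in> A" "\<alpha>' \<in> A" "\<alpha> \<noteq> \<alpha>'" for \<alpha> \<alpha>'
  proof (cases "\<alpha> \<inter> \<alpha>' = \<alpha>")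
    case True
    have "geS Q S1 \<alpha>' \<alpha>" using True by (auto simp: geS_def Gam_def)
    then obtain j where "j \<in> {0..<J} - (S1 \<union> S2)" "Gam Q j \<alpha> \<noteq> Gam Q j \<alpha>'"
      using Bx[OF a] by blast
    thus ?thesis by (auto simp: Z_def Gam_def)
  next
    case False
    have mu: "\<alpha> \<inter> \<alpha>' \<in> A" using perm_Int a by (simp add: A_def)
    have "geS Q S1 \<alpha> (\<alpha> \<inter> \<alpha>')" by (auto simp: geS_def Gam_def)
    then obtain j where j: "j \<in> {0..<J} - (S1 \<union> S2)" "Gam Q j (\<alpha> \<inter> \<alpha>') \<noteq> Gam Q j \<alpha>"
      using Bx[OF mu a(1)] False by blast
    hence "Q j \<subseteq> \<alpha>" "\<not> Q j \<subseteq> \<alpha> \<inter> \<alpha>'" by (auto simp: Gam_def)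
    hence "\<not> Q j \<subseteq> \<alpha>'" by auto
    thus ?thesis using j \<open>Q j \<subseteq> \<alpha>\<close> by (auto simp: Z_def)
  qed
  have Zd: "\<And>i i'. i < n \<Longrightarrow> i' < n \<Longrightarrow> i \<noteq> i' \<Longrightarrow> \<exists>j\<in>Z. V i j \<noteq> V i' j"
  proof -
    fix i i' assume ii: "i < n" "i' < n" "i \<noteq> i'"
    have "ap i \<noteq> ap i'" using ap ii by (auto simp: bij_betw_def inj_on_def)
    then obtain j where j: "j \<in> Z" "(Q j \<subseteq> ap i) \<noteq> (Q j \<subseteq> ap i')" using Zdist apA ii by blast
    have "\<theta> j (ap i) \<noteq> \<theta> j (ap i')"
      by (rule vt_neq[OF par(1)]) (use j apA ii in \<open>auto simp: Z_def A_def\<close>)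
    thus "\<exists>j\<in>Z. V i j \<noteq> V i' j" using j by (auto simp: V_def)
  qed
  have NX0: "NX i0 = {}" and NY0: "NY i0 = {}"
    using i0 Q S1J S2J by (auto simp: NX_def NY_def tp_def)
  obtain \<sigma> where \<sigma>: "bij_betw \<sigma> {0..<n} {0..<n}"
    and \<sigma>e: "\<forall>k<n. q' k = q (\<sigma> k) \<and> (\<forall>j\<in>S1 \<union> S2 \<union> Z. V' k j = V (\<sigma> k) j)"
    using core[where n=n and V=V and V'=V' and q=q and q'=q' and X=S1 and Y=S2 and Z=Z and NX=NX and NY=NY and ?i0.0=i0, OF mom d1 fins NXs NYs detF detG qnz Zd i0(1) NX0 NY0]
    by blast
  have \<sigma>n: "\<And>k. k < n \<Longrightarrow> \<sigma> k < n" using \<sigma> by (auto simp: bij_betw_def)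
  have \<sigma>s: "\<exists>k<n. \<sigma> k = i" if "i < n" for i
  proof -
    have "i \<in> \<sigma> ` {0..<n}" using \<sigma> that by (simp add: bij_betw_def)
    thus ?thesis by auto
  qed
  have nn: "n' = n"
  proof (rule ccontr)
    assume "n' \<noteq> n"
    hence "n' < n" using n'le by simp
    hence "q' n' = q (\<sigma> n')" using \<sigma>e by blast
    moreover have "q (\<sigma> n') \<noteq> 0" using qnz \<sigma>n \<open>n' < n\<close> by blast
    ultimately show False by (simp add: q'_def)
  qed
  have thA: "\<theta>' j (bp k) = \<theta> j (ap (\<sigma> k))" if "k < n" "j < J" for k j
  proof -
    have "j \<in> S1 \<union> S2 \<union> Z" using that by (auto simp: Z_def)
    thus ?thesis using \<sigma>e that by (auto simp: V_def V'_def)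
  qed
  have pA: "lcbn_prob K E' t' (bp k) = lcbn_prob K E t (ap (\<sigma> k))" if "k < n" for k
    using \<sigma>e that nn by (auto simp: q_def q'_def)
  have tops: "\<theta>' j tp = \<theta> j tp" if j: "j < J" for j
  proof -
    obtain k1 where k1: "k1 < n" "bp k1 = tp" using bpS tpA(2) nn by auto
    have "\<theta>' j tp = \<theta> j (ap (\<sigma> k1))" using thA[OF k1(1) j] k1 by simp
    also have "\<dots> \<le> \<theta> j tp"
      using vt_le[OF par(1) E j Q[rule_format, OF j]] apA \<sigma>n k1 by (simp add: A_def tp_def)
    finally have le1: "\<theta>' j tp \<le> \<theta> j tp" .
    obtain k2 where k2: "k2 < n" "\<sigma> k2 = i0" using \<sigma>s i0 by blast
    have "\<theta> j tp = \<theta>' j (bp k2)" using thA[OF k2(1) j] k2 i0 by simp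
    also have "\<dots> \<le> \<theta>' j tp"
      using vt_le[OF vt' E' j Q[rule_format, OF j]] bpA nn k2 by (simp add: A'_def tp_def)
    finally show ?thesis using le1 by simp
  qed
  have gamE: "(Q j \<subseteq> bp k) = (Q j \<subseteq> ap (\<sigma> k))" if "k < n" "j < J" for k j
    using gam'[OF that(2) bpA] gam[OF that(2) apA] thA[OF that] tops[OF that(2)] \<sigma>n that nn by simp
  have inA: "bp k \<in> A" if k: "k < n" for k
  proof (rule ccontr)
    assume "bp k \<notin> A"
    moreover have "bp k \<in> Pow {0..<K}" using perm_sub[of "bp k" K E'] bpA[of k] k nn by (simp add: A'_def)
    ultimately have "\<exists>j<J. Gam Q j (ap (\<sigma> k)) \<noteq> Gam Q j (bp k)"
      using Cx[OF apA[OF \<sigma>n[OF k]]] by blast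
    thus False using gamE k by (auto simp: Gam_def)
  qed
  have bpeq: "bp k = ap (\<sigma> k)" if k: "k < n" for k
    using dist1[OF inA[OF k] apA[OF \<sigma>n[OF k]]] gamE k S1J by blast
  have sub: "A' \<subseteq> A" using bpS inA nn by force
  have AA: "A' = A" using card_subset_eq[OF finA(1) sub] nn by (simp add: n_def n'_def)
  have EE: "E' = E"
    using E_sub[OF E E'] E_sub[OF E' E] AA by (auto simp: A_def A'_def)
  have repr: "\<exists>k<n. \<alpha> = bp k \<and> \<alpha> = ap (\<sigma> k)" if aA: "\<alpha> \<in> A" for \<alpha>
  proof -
    obtain i where i: "i < n" "ap i = \<alpha>" using apS[OF aA] by blast
    obtain k where k: "k < n" "\<sigma> k = i" using \<sigma>s i(1) by blast
    thus ?thesis using bpeq[OF k(1)] i by auto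
  qed
  have th: "\<forall>j<J. \<forall>\<alpha>\<in>perm K E. \<theta>' j \<alpha> = \<theta> j \<alpha>"
    using repr thA unfolding A_def by metis
  have "\<forall>\<alpha>\<in>perm K E. lcbn_prob K E t \<alpha> = lcbn_prob K E t' \<alpha>"
    using repr pA EE unfolding A_def by metis
  hence "\<forall>k<K. t' k = t k" using t_ident[OF E par(2) tt'] by blast
  thus "E' = E \<and> (\<forall>j<J. \<forall>\<alpha>\<in>perm K E. \<theta>' j \<alpha> = \<theta> j \<alpha>) \<and> (\<forall>k<K. t' k = t k)"
    using EE th by blast
qed


end
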